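(* Let $A$ be an atom and $\mathcal{H}_{pos}$ a finite set of atoms such that $\mathrm{Var}(\{A\}\cup\mathcal{H}_{pos})\cap\mathcal{U}=\emptyset$ and $A$ unifies with every $B\in\mathcal{H}_{pos}$. In the algorithm MUS on $A,\mathcal{H}_{pos}$, the loop of step (2) always terminates, and the following statement is an invariant of this loop: for each $A'\in\{A\}\cup\mathcal{H}_{pos}$ there exist $B\in\mathcal{B}$ and a substitution $\theta$ such that $A'\theta=B\theta$ and $\mathrm{Var}(\mathcal{B})\cap\mathrm{Dom}(\theta)=\emptyset$.
   Context: $\mathcal{U}$ is a fixed infinite set of special fresh variables. Disagreement pair: for atoms (or terms) $s,t$, subterms $s'$ of $s$ and $t'$ of $t$ occurring at the same position form a disagreement pair if the root symbols of $s'$ and $t'$ differ while all symbols on the path from that position up to the root coincide in $s$ and $t$; a disagreement pair occurs in a set of atoms $\mathcal{B}$ if it is a disagreement pair of two atoms of $\mathcal{B}$. A disagreement pair $t,t'$ is simple if one of the terms is a variable not occurring in the other and no variable of $\mathcal{U}$ occurs in $t,t'$. Algorithm MUS: (1) $\mathcal{B}:=\{A\}\cup\mathcal{H}_{pos}$. (2) While simple disagreement pairs occur in $\mathcal{B}$: nondeterministically choose a simple disagreement pair $X,t$ (or $t,X$), $X$ a variable, such that there is no other simple disagreement pair $X,t'$ (or $t',X$) in $\mathcal{B}$ with $t'$ a strict instance of $t$; set $\mathcal{B}:=\mathcal{B}\{X/t\}$. (3) While $|\mathcal{B}|\neq 1$: nondeterministically choose a disagreement pair $t,t'$ in $\mathcal{B}$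 and replace all occurrences of the disagreement pair $t,t'$ in $\mathcal{B}$ by one fresh variable of $\mathcal{U}$. (4) With $\mathcal{B}=\{B\}$, return $\theta$ with $A\theta=B$ and $\mathrm{Dom}(\theta)\subseteq\mathrm{Var}(A)$. *)

theory Defs
  imports Main
begin

text \<open>First-order terms; atoms are represented as terms whose root symbol is the predicate symbol.\<close>
datatype ('f, 'v) trm = Var 'v | Fun 'f "('f, 'v) trm list"

type_synonym ('f, 'v) subst = "'v \<Rightarrow> ('f, 'v) trm"

fun subst_apply :: "('f, 'v) trm \<Rightarrow> ('f, 'v) subst \<Rightarrow> ('f, 'v) trm" (infixl "\<cdot>" 67) where
  "Var x \<cdot> \<sigma> = \<sigma> x"
| "Fun f ts \<cdot> \<sigma> = Fun f (map (\<lambda>t. t \<cdot> \<sigma>) ts)"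

fun vars :: "('f, 'v) trm \<Rightarrow> 'v set" where
  "vars (Var x) = {x}"
| "vars (Fun f ts) = \<Union> (set (map vars ts))"

definition vars_set :: "('f, 'v) trm set \<Rightarrow> 'v set" where
  "vars_set Bs = \<Union> (vars ` Bs)"

definition subst_dom :: "('f, 'v) subst \<Rightarrow> 'v set" where
  "subst_dom \<sigma> = {x. \<sigma> x \<noteq> Var x}"

fun root :: "('f, 'v) trm \<Rightarrow> ('f \<times> nat) + 'v" where
  "root (Var x) = Inr x"
| "root (Fun f ts) = Inl (f, length ts)"

fun subt_at :: "('f, 'v) trm \<Rightarrow> nat list \<Rightarrow> ('f, 'v) trm option" where
  "subt_at t [] = Some t"
| "subt_at (Var x) (i # p) = None"
| "subt_at (Fun f ts) (i # p) = (if i < length ts then subt_at (ts ! i) p else None)"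

definition disagreement_pair :: "('f, 'v) trm \<Rightarrow> ('f, 'v) trm \<Rightarrow> ('f, 'v) trm \<Rightarrow> ('f, 'v) trm \<Rightarrow> bool" where
  "disagreement_pair s t u v \<longleftrightarrow>
     (\<exists>p. subt_at s p = Some u \<and> subt_at t p = Some v \<and> root u \<noteq> root v \<and>
          (\<forall>k < length p. map_option root (subt_at s (take k p)) = map_option root (subt_at t (take k p))))"

definition dp_in :: "('f, 'v) trm set \<Rightarrow> ('f, 'v) trm \<Rightarrow> ('f, 'v) trm \<Rightarrow> bool" where
  "dp_in Bs u v \<longleftrightarrow> (\<exists>s\<in>Bs. \<exists>t\<in>Bs. disagreement_pair s t u v)"

definition simple_dp :: "'v set \<Rightarrow> ('f, 'v) trm \<Rightarrow> ('f, 'v) trm \<Rightarrow> bool" where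
  "simple_dp U u v \<longleftrightarrow>
     ((\<exists>x. u = Var x \<and> x \<notin> vars v) \<or> (\<exists>x. v = Var x \<and> x \<notin> vars u)) \<and>
     (vars u \<union> vars v) \<inter> U = {}"

definition var_pair :: "'v set \<Rightarrow> ('f, 'v) trm set \<Rightarrow> 'v \<Rightarrow> ('f, 'v) trm \<Rightarrow> bool" where
  "var_pair U Bs x t \<longleftrightarrow>
     (dp_in Bs (Var x) t \<and> simple_dp U (Var x) t) \<or> (dp_in Bs t (Var x) \<and> simple_dp U t (Var x))"

definition is_instance :: "('f, 'v) trm \<Rightarrow> ('f, 'v) trm \<Rightarrow> bool" where
  "is_instance t' t \<longleftrightarrow> (\<exists>\<sigma>. t' = t \<cdot> \<sigma>)"

definition strict_instance :: "('f, 'v) trm \<Rightarrow> ('f, 'v) trm \<Rightarrow> bool" where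
  "strict_instance t' t \<longleftrightarrow> is_instance t' t \<and> \<not> is_instance t t'"

definition mus_step2 :: "'v set \<Rightarrow> ('f, 'v) trm set \<Rightarrow> ('f, 'v) trm set \<Rightarrow> bool" where
  "mus_step2 U Bs Bs' \<longleftrightarrow>
     (\<exists>x t. var_pair U Bs x t \<and>
            \<not> (\<exists>t'. var_pair U Bs x t' \<and> strict_instance t' t) \<and>
            Bs' = (\<lambda>s. s \<cdot> (Var(x := t))) ` Bs)"

end

theory Submission
  imports Defs
begin

lemma finite_vars: "finite (vars t)"
  by (induction t) auto

lemma subst_comp: "t \<cdot> \<sigma> \<cdot> \<tau> = t \<cdot> (\<lambda>y. \<sigma> y \<cdot> \<tau>)"
  by (induction t) auto

lemma vars_subst: "vars (t \<cdot> \<sigma>) = (\<Union>y\<in>vars t. vars (\<sigma> y))"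
  by (induction t) auto

lemma subst_id: "(\<forall>y\<in>vars t. \<sigma> y = Var y) \<Longrightarrow> t \<cdot> \<sigma> = t"
  by (induction t) (auto intro: map_idI)

lemma subt_vars: "subt_at s p = Some u \<Longrightarrow> vars u \<subseteq> vars s"
proof (induction s p rule: subt_at.induct)
  case (3 f ts i p)
  then show ?case by (auto split: if_splits dest!: nth_mem)
qed auto

lemma dp_vars: "dp_in Bs u v \<Longrightarrow> vars u \<subseteq> vars_set Bs \<and> vars v \<subseteq> vars_set Bs"
  unfolding dp_in_def disagreement_pair_def vars_set_def
  by (fastforce dest!: subt_vars)

lemma step_facts:
  assumes "mus_step2 U Bs Bs'"
  shows "\<exists>x t. x \<in> vars_set Bs \<and> x \<notin> vars t \<and> vars t \<subseteq> vars_set Bs \<and>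
     Bs' = (\<lambda>s. s \<cdot> (Var(x := t))) ` Bs"
proof -
  obtain x t where vp: "var_pair U Bs x t" and B': "Bs' = (\<lambda>s. s \<cdot> (Var(x := t))) ` Bs"
    using assms unfolding mus_step2_def by blast
  have "x \<notin> vars t" using vp unfolding var_pair_def simple_dp_def by auto
  moreover have "vars (Var x) \<subseteq> vars_set Bs \<and> vars t \<subseteq> vars_set Bs"
    using vp unfolding var_pair_def by (auto dest: dp_vars)
  ultimately show ?thesis using B' by auto
qed

lemma step_vars:
  assumes "x \<notin> vars t" "vars t \<subseteq> vars_set Bs"
  shows "vars_set ((\<lambda>s. s \<cdot> (Var(x := t))) ` Bs) \<subseteq> vars_set Bs - {x}"
  using assms unfolding vars_set_def by (fastforce simp: vars_subst split: if_splits)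

lemma step_card:
  assumes "mus_step2 U Bs Bs'" "finite Bs"
  shows "finite Bs' \<and> card (vars_set Bs') < card (vars_set Bs)"
proof -
  obtain x t where h: "x \<in> vars_set Bs" "x \<notin> vars t" "vars t \<subseteq> vars_set Bs"
     "Bs' = (\<lambda>s. s \<cdot> (Var(x := t))) ` Bs"
    using step_facts[OF assms(1)] by blast
  have fin: "finite (vars_set Bs)" using assms(2) finite_vars unfolding vars_set_def by auto
  have "vars_set Bs' \<subset> vars_set Bs" using step_vars[OF h(2,3)] h(1,4) by blast
  then show ?thesis using fin h(4) assms(2) by (simp add: psubset_card_mono)
qed

theorem mainTheorem6:
  fixes U :: "'v set" and A :: "('f, 'v) trm" and H :: "('f, 'v) trm set"
  assumes "infinite U"
    and "finite H"
    and "vars_set (insert A H) \<inter> U = {}"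
    and "\<forall>B\<in>H. \<exists>\<sigma>. A \<cdot> \<sigma> = B \<cdot> \<sigma>"
  shows "\<not> (\<exists>f. f 0 = insert A H \<and> (\<forall>i. mus_step2 U (f i) (f (Suc i))))
    \<and> (\<forall>Bs. (mus_step2 U)\<^sup>*\<^sup>* (insert A H) Bs \<longrightarrow>
          (\<forall>A'\<in>insert A H. \<exists>B\<in>Bs. \<exists>\<theta>. A' \<cdot> \<theta> = B \<cdot> \<theta> \<and> vars_set Bs \<inter> subst_dom \<theta> = {}))"
proof
  show "\<not> (\<exists>f. f 0 = insert A H \<and> (\<forall>i. mus_step2 U (f i) (f (Suc i))))"
  proof
    assume "\<exists>f. f 0 = insert A H \<and> (\<forall>i. mus_step2 U (f i) (f (Suc i)))"
    then obtain f where f0: "f 0 = insert A H" and fs: "\<forall>i. mus_step2 U (f i) (f (Suc i))" by blast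
    have "\<forall>i. finite (f i) \<and> card (vars_set (f i)) + i \<le> card (vars_set (f 0))"
    proof
      fix i show "finite (f i) \<and> card (vars_set (f i)) + i \<le> card (vars_set (f 0))"
      proof (induction i)
        case 0 then show ?case using f0 assms(2) by simp
      next
        case (Suc i)
        then show ?case using step_card[OF fs[rule_format, of i]] by auto
      qed
    qed
    then have "card (vars_set (f (Suc (card (vars_set (f 0)))))) + Suc (card (vars_set (f 0)))
        \<le> card (vars_set (f 0))" by blast
    then show False by simp
  qed
next
  show "\<forall>Bs. (mus_step2 U)\<^sup>*\<^sup>* (insert A H) Bs \<longrightarrow>
          (\<forall>A'\<in>insert A H. \<exists>B\<in>Bs. \<exists>\<theta>. A' \<cdot> \<theta> = B \<cdot> \<theta> \<and> vars_set Bs \<inter> subst_dom \<theta> = {})"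
  proof (intro allI impI)
    fix Bs assume "(mus_step2 U)\<^sup>*\<^sup>* (insert A H) Bs"
    then show "\<forall>A'\<in>insert A H. \<exists>B\<in>Bs. \<exists>\<theta>. A' \<cdot> \<theta> = B \<cdot> \<theta> \<and> vars_set Bs \<inter> subst_dom \<theta> = {}"
    proof (induction rule: rtranclp_induct)
      case base
      show ?case
      proof
        fix A' assume "A' \<in> insert A H"
        then show "\<exists>B\<in>insert A H. \<exists>\<theta>. A' \<cdot> \<theta> = B \<cdot> \<theta> \<and> vars_set (insert A H) \<inter> subst_dom \<theta> = {}"
          by (intro bexI[of _ A'] exI[of _ Var]) (auto simp: subst_dom_def)
      qed
    next
      case (step Bs Bs')
      obtain x t where h: "x \<in> vars_set Bs" "x \<notin> vars t" "vars t \<subseteq> vars_set Bs"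
         "Bs' = (\<lambda>s. s \<cdot> (Var(x := t))) ` Bs"
        using step_facts[OF step(2)] by blast
      have sub: "vars_set Bs' \<subseteq> vars_set Bs - {x}" using step_vars[OF h(2,3)] h(4) by simp
      show ?case
      proof
        fix A' assume "A' \<in> insert A H"
        then obtain B \<theta> where B: "B \<in> Bs" "A' \<cdot> \<theta> = B \<cdot> \<theta>" "vars_set Bs \<inter> subst_dom \<theta> = {}"
          using step(3) by blast
        define \<sigma> :: "('f,'v) subst" where "\<sigma> = Var(x := t)"
        define \<theta>' where "\<theta>' = (\<lambda>y. \<theta> y \<cdot> \<sigma>)"
        have Bv: "vars B \<subseteq> vars_set Bs" using B(1) unfolding vars_set_def by auto
        have "B \<cdot> \<theta> = B" using Bv B(3) by (intro subst_id) (auto simp: subst_dom_def)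
        then have e1: "A' \<cdot> \<theta>' = B \<cdot> \<sigma>" using B(2) by (simp add: \<theta>'_def subst_comp[symmetric])
        have th': "\<forall>y\<in>vars_set Bs'. \<theta>' y = Var y"
        proof
          fix y assume "y \<in> vars_set Bs'"
          then have "y \<in> vars_set Bs" "y \<noteq> x" using sub by auto
          then have "\<theta> y = Var y" using B(3) by (auto simp: subst_dom_def)
          then show "\<theta>' y = Var y" using \<open>y \<noteq> x\<close> by (simp add: \<theta>'_def \<sigma>_def)
        qed
        have Bs'_in: "B \<cdot> \<sigma> \<in> Bs'" using h(4) B(1) \<sigma>_def by auto
        then have "vars (B \<cdot> \<sigma>) \<subseteq> vars_set Bs'" unfolding vars_set_def by auto
        then have "B \<cdot> \<sigma> \<cdot> \<theta>' = B \<cdot> \<sigma>" using th' by (intro subst_id) auto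
        moreover have "vars_set Bs' \<inter> subst_dom \<theta>' = {}" using th' by (auto simp: subst_dom_def)
        ultimately show "\<exists>B\<in>Bs'. \<exists>\<theta>. A' \<cdot> \<theta> = B \<cdot> \<theta> \<and> vars_set Bs' \<inter> subst_dom \<theta> = {}"
          using e1 Bs'_in by metis
      qed
    qed
  qed
qed

end
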